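(* Let $n\geq 2$ and $m\geq 1$ be integers, let $K$ be an infinite field, and let $p(x_1,\ldots,x_m)\in K\langle x_1,\ldots,x_m\rangle$ be a noncommutative polynomial with zero constant term. Suppose $\mathrm{ord}(p)=r$ with $1<r<n-1$. Then \[ p(T_n(K))+p(T_n(K))=T_n(K)^{(r-1)}, \] i.e. every matrix in $T_n(K)^{(r-1)}$ is a sum of two elements of $p(T_n(K))$, and every such sum lies in $T_n(K)^{(r-1)}$. In particular, if $r=n-2$, then $p(T_n(K))=T_n(K)^{(n-3)}$.
   Context: $T_n(K)$ denotes the algebra of $n\times n$ upper triangular matrices over $K$. For an integer $t\geq 0$, $T_n(K)^{(t)}$ denotes the set of upper triangular $n\times n$ matrices whose $(i,j)$ entries are zero whenever $j-i\leq t$ (so $T_n(K)^{(t)}$ is the $(t+1)$-st power $J^{t+1}$ of the Jacobson radical $J$ of $T_n(K)$). For an algebra $\mathcal{A}$, $p(\mathcal{A})=\{p(a_1,\ldots,a_m): a_1,\ldots,a_m\in\mathcal{A}\}$, and $p(\mathcal{A})+p(\mathcal{A})=\{a+b: a,b\in p(\mathcal{A})\}$. The order $\mathrm{ord}(p)$ of a polynomial $p$ with zero constant term is the least positive integer $r$ such that $p(T_r(K))=\{0\}$ but $p(T_{r+1}(K))\neq\{0\}$, where $T_1(K)=K$; $p$ has order $0$ if $p(K)\neq\{0\}$. *)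

theory Defs
  imports "Jordan_Normal_Form.Matrix" "HOL-Library.Poly_Mapping"
begin

text \<open>Noncommutative polynomials in K<x_0,...,x_{m-1}>: finitely supported maps
  from words (lists of variable indices) to coefficients.\<close>
type_synonym 'a ncpoly = "nat list \<Rightarrow>\<^sub>0 'a"

definition nc_vars :: "nat \<Rightarrow> 'a::zero ncpoly \<Rightarrow> bool" where
  "nc_vars m p \<longleftrightarrow> (\<forall>w \<in> Poly_Mapping.keys p. set w \<subseteq> {..<m})"

definition word_prod :: "nat \<Rightarrow> (nat \<Rightarrow> 'a::comm_ring_1 mat) \<Rightarrow> nat list \<Rightarrow> 'a mat" where
  "word_prod n a w = foldr (\<lambda>i M. a i * M) w (1\<^sub>m n)"

definition nc_eval :: "nat \<Rightarrow> 'a::comm_ring_1 ncpoly \<Rightarrow> (nat \<Rightarrow> 'a mat) \<Rightarrow> 'a mat" where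
  "nc_eval n p a = mat n n (\<lambda>(i,j). \<Sum>w\<in>Poly_Mapping.keys p. Poly_Mapping.lookup p w * (word_prod n a w) $$ (i,j))"

definition UT :: "nat \<Rightarrow> 'a::comm_ring_1 mat set" where
  "UT n = {A \<in> carrier_mat n n. upper_triangular A}"

definition UT_pow :: "nat \<Rightarrow> nat \<Rightarrow> 'a::comm_ring_1 mat set" where
  "UT_pow n t = {A \<in> carrier_mat n n. \<forall>i<n. \<forall>j<n. int j - int i \<le> int t \<longrightarrow> A $$ (i,j) = 0}"

definition nc_image :: "nat \<Rightarrow> nat \<Rightarrow> 'a::comm_ring_1 ncpoly \<Rightarrow> 'a mat set" where
  "nc_image m n p = {nc_eval n p a | a. \<forall>i<m. a i \<in> UT n}"

definition nc_vanishes :: "nat \<Rightarrow> nat \<Rightarrow> 'a::comm_ring_1 ncpoly \<Rightarrow> bool" where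
  "nc_vanishes m n p \<longleftrightarrow> nc_image m n p = {0\<^sub>m n n}"

text \<open>ord(p) = r (T_1(K) identified with K).\<close>
definition nc_has_order :: "nat \<Rightarrow> 'a::comm_ring_1 ncpoly \<Rightarrow> nat \<Rightarrow> bool" where
  "nc_has_order m p r \<longleftrightarrow>
     (if r = 0 then \<not> nc_vanishes m 1 p
      else nc_vanishes m 1 p \<and>
        (r = (LEAST s. 0 < s \<and> nc_vanishes m s p \<and> \<not> nc_vanishes m (s+1) p)) \<and>
        nc_vanishes m r p \<and> \<not> nc_vanishes m (r+1) p)"

end

theory Submission
  imports Defs "HOL-Computational_Algebra.Polynomial"
begin


lemma mult_entry:
  assumes "A \<in> carrier_mat n n" "B \<in> carrier_mat n n" "i < n" "j < n"
  shows "(A * B) $$ (i,j) = (\<Sum>z<n. A $$ (i,z) * B $$ (z,j))"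
  using assms by (auto simp: scalar_prod_def lessThan_atLeast0 intro!: sum.cong)

lemma word_prod_Nil[simp]: "word_prod n a [] = 1\<^sub>m n"
  by (simp add: word_prod_def)
lemma word_prod_Cons[simp]: "word_prod n a (k#w) = a k * word_prod n a w"
  by (simp add: word_prod_def)

lemma word_prod_carrier:
  "(\<forall>i\<in>set w. a i \<in> carrier_mat n n) \<Longrightarrow> word_prod n a w \<in> carrier_mat n n"
  by (induction w) auto

lemma word_prod_cong:
  "(\<forall>i\<in>set w. a i = b i) \<Longrightarrow> word_prod n a w = word_prod n b w"
  by (induction w) auto

lemma nc_eval_carrier[simp]: "nc_eval n p a \<in> carrier_mat n n"
  by (simp add: nc_eval_def)

lemma nc_eval_dim[simp]: "dim_row (nc_eval n p a) = n" "dim_col (nc_eval n p a) = n"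
  by (simp_all add: nc_eval_def)

lemma nc_eval_entry:
  "i < n \<Longrightarrow> j < n \<Longrightarrow> nc_eval n p a $$ (i,j) =
    (\<Sum>w\<in>Poly_Mapping.keys p. Poly_Mapping.lookup p w * (word_prod n a w) $$ (i,j))"
  by (simp add: nc_eval_def)

lemma nc_eval_cong:
  assumes "nc_vars m p" "\<forall>i<m. a i = b i"
  shows "nc_eval n p a = nc_eval n p b"
proof -
  have "\<And>w. w \<in> Poly_Mapping.keys p \<Longrightarrow> word_prod n a w = word_prod n b w"
    using assms by (intro word_prod_cong) (auto simp: nc_vars_def)
  thus ?thesis by (simp add: nc_eval_def)
qed

lemma UT_iff: "A \<in> UT n \<longleftrightarrow> A \<in> carrier_mat n n \<and> (\<forall>i<n. \<forall>j<i. A $$ (i,j) = 0)"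
  by (auto simp: UT_def upper_triangular_def)

lemma UT_mult: assumes "A \<in> UT n" "B \<in> UT n" shows "A * B \<in> UT n"
proof -
  have c: "A \<in> carrier_mat n n" "B \<in> carrier_mat n n" using assms by (auto simp: UT_iff)
  show ?thesis unfolding UT_iff
  proof (intro conjI allI impI)
    show "A * B \<in> carrier_mat n n" using c by auto
    fix i j assume ij: "i < n" "j < i"
    have "(A * B) $$ (i,j) = (\<Sum>z<n. A $$ (i,z) * B $$ (z,j))"
      using c ij by (intro mult_entry) auto
    also have "\<dots> = 0"
    proof (intro sum.neutral ballI)
      fix z assume "z \<in> {..<n}"
      show "A $$ (i,z) * B $$ (z,j) = 0"
      proof (cases "z < i")
        case True then show ?thesis using assms ij by (auto simp: UT_iff)
      next
        case False then have "j < z" using ij by auto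
        then show ?thesis using assms ij \<open>z \<in> {..<n}\<close> by (auto simp: UT_iff)
      qed
    qed
    finally show "(A * B) $$ (i,j) = 0" .
  qed
qed

lemma UT_one: "1\<^sub>m n \<in> UT n" by (auto simp: UT_iff)

lemma word_prod_UT:
  "(\<forall>i\<in>set w. a i \<in> UT n) \<Longrightarrow> word_prod n a w \<in> UT n"
  by (induction w) (auto intro: UT_mult UT_one)

lemma nc_eval_UT:
  assumes "nc_vars m p" "\<forall>i<m. a i \<in> UT n"
  shows "nc_eval n p a \<in> UT n"
  unfolding UT_iff
proof (intro conjI allI impI)
  fix i j assume ij: "i < n" "j < i"
  have "\<And>w. w \<in> Poly_Mapping.keys p \<Longrightarrow> word_prod n a w $$ (i,j) = 0"
  proof -
    fix w assume "w \<in> Poly_Mapping.keys p"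
    then have "set w \<subseteq> {..<m}" using assms(1) by (auto simp: nc_vars_def)
    then have "word_prod n a w \<in> UT n" using assms(2) by (intro word_prod_UT) auto
    then show "word_prod n a w $$ (i,j) = 0" using ij by (auto simp: UT_iff)
  qed
  then show "nc_eval n p a $$ (i,j) = 0" using ij by (simp add: nc_eval_entry)
qed simp



definition blk :: "nat \<Rightarrow> nat \<Rightarrow> 'a mat \<Rightarrow> 'a mat" where
  "blk x k M = mat k k (\<lambda>(i,j). M $$ (x+i, x+j))"

lemma blk_carrier[simp]: "blk x k M \<in> carrier_mat k k" by (simp add: blk_def)
lemma blk_dim[simp]: "dim_row (blk x k M) = k" "dim_col (blk x k M) = k" by (simp_all add: blk_def)
lemma blk_entry[simp]: "i < k \<Longrightarrow> j < k \<Longrightarrow> blk x k M $$ (i,j) = M $$ (x+i,x+j)"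
  by (simp add: blk_def)

lemma blk_UT: "A \<in> UT n \<Longrightarrow> x + k \<le> n \<Longrightarrow> blk x k A \<in> UT k"
  by (auto simp: UT_iff)

lemma blk_one: "x + k \<le> n \<Longrightarrow> blk x k (1\<^sub>m n) = 1\<^sub>m k"
  by (intro eq_matI) auto

lemma blk_mult:
  fixes A B :: "'a::comm_ring_1 mat"
  assumes "A \<in> UT n" "B \<in> UT n" "x + k \<le> n"
  shows "blk x k (A * B) = blk x k A * blk x k B"
proof (intro eq_matI)
  have c: "A \<in> carrier_mat n n" "B \<in> carrier_mat n n" using assms by (auto simp: UT_iff)
  fix i j assume ij: "i < dim_row (blk x k A * blk x k B)" "j < dim_col (blk x k A * blk x k B)"
  then have ij: "i < k" "j < k" by auto
  have "blk x k (A * B) $$ (i,j) = (\<Sum>z<n. A $$ (x+i,z) * B $$ (z,x+j))"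
    using ij assms c by (simp del: index_mult_mat add: mult_entry[OF c])
  also have "\<dots> = (\<Sum>z\<in>{x..<x+k}. A $$ (x+i,z) * B $$ (z,x+j))"
  proof (rule sum.mono_neutral_right)
    show "\<forall>z\<in>{..<n} - {x..<x + k}. A $$ (x + i, z) * B $$ (z, x + j) = 0"
    proof
      fix z assume z: "z \<in> {..<n} - {x..<x + k}"
      show "A $$ (x + i, z) * B $$ (z, x + j) = 0"
      proof (cases "z < x")
        case True
        have "A $$ (x + i, z) = 0" using assms(1,3) ij z True by (auto simp: UT_iff)
        then show ?thesis by simp
      next
        case False then have "x + j < z" using z ij by auto
        then show ?thesis using assms(2) ij z by (auto simp: UT_iff)
      qed
    qed
  qed (use assms in auto)
  also have "\<dots> = (\<Sum>z<k. A $$ (x+i,x+z) * B $$ (x+z,x+j))"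
    by (rule sum.reindex_bij_witness[of _ "\<lambda>z. x + z" "\<lambda>z. z - x"]) auto
  also have "\<dots> = (blk x k A * blk x k B) $$ (i,j)"
    using ij by (simp del: index_mult_mat add: mult_entry[OF blk_carrier blk_carrier])
  finally show "blk x k (A * B) $$ (i,j) = (blk x k A * blk x k B) $$ (i,j)" .
qed auto

lemma blk_word_prod:
  fixes a :: "nat \<Rightarrow> 'a::comm_ring_1 mat"
  assumes "\<forall>i\<in>set w. a i \<in> UT n" "x + k \<le> n"
  shows "blk x k (word_prod n a w) = word_prod k (\<lambda>i. blk x k (a i)) w"
  using assms
proof (induction w)
  case Nil then show ?case by (simp add: blk_one)
next
  case (Cons i w)
  then have "word_prod n a w \<in> UT n" by (intro word_prod_UT) auto
  then show ?case using Cons by (simp add: blk_mult[of "a i" n "word_prod n a w"])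
qed

lemma blk_nc_eval:
  fixes a :: "nat \<Rightarrow> 'a::comm_ring_1 mat"
  assumes "nc_vars m p" "\<forall>i<m. a i \<in> UT n" "x + k \<le> n"
  shows "blk x k (nc_eval n p a) = nc_eval k p (\<lambda>i. blk x k (a i))"
proof (intro eq_matI)
  fix i j assume "i < dim_row (nc_eval k p (\<lambda>i. blk x k (a i)))" "j < dim_col (nc_eval k p (\<lambda>i. blk x k (a i)))"
  then have ij: "i < k" "j < k" by (auto simp: nc_eval_def)
  have "\<And>w. w \<in> Poly_Mapping.keys p \<Longrightarrow> word_prod n a w $$ (x+i,x+j) = word_prod k (\<lambda>i. blk x k (a i)) w $$ (i,j)"
  proof -
    fix w assume "w \<in> Poly_Mapping.keys p"
    then have "set w \<subseteq> {..<m}" using assms(1) by (auto simp: nc_vars_def)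
    then have "blk x k (word_prod n a w) = word_prod k (\<lambda>i. blk x k (a i)) w"
      using assms by (intro blk_word_prod) auto
    then show "word_prod n a w $$ (x+i,x+j) = word_prod k (\<lambda>i. blk x k (a i)) w $$ (i,j)"
      using ij by (metis blk_entry)
  qed
  then show "blk x k (nc_eval n p a) $$ (i,j) = nc_eval k p (\<lambda>i. blk x k (a i)) $$ (i,j)"
    using ij assms by (simp add: nc_eval_entry)
qed (auto simp: nc_eval_def)

lemma nc_eval_entry_blk:
  fixes a :: "nat \<Rightarrow> 'a::comm_ring_1 mat"
  assumes "nc_vars m p" "\<forall>i<m. a i \<in> UT n" "x + k \<le> n" "i < k" "j < k"
  shows "nc_eval n p a $$ (x+i,x+j) = nc_eval k p (\<lambda>i. blk x k (a i)) $$ (i,j)"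
  using blk_nc_eval[OF assms(1-3)] assms(4,5) by (metis blk_entry)

lemma vanish_down:
  fixes p :: "'a::comm_ring_1 ncpoly"
  assumes "nc_vars m p" "nc_vanishes m r p" "s \<le> r" "\<forall>i<m. a i \<in> UT s"
  shows "nc_eval s p a = 0\<^sub>m s s"
proof -
  define b where "b i = mat r r (\<lambda>(u,v). if u < s \<and> v < s then a i $$ (u,v) else 0)" for i
  have bUT: "\<forall>i<m. b i \<in> UT r"
    using assms(4) by (auto simp: UT_iff b_def)
  have "\<forall>i<m. blk 0 s (b i) = a i"
    using assms(3,4) by (auto simp: UT_iff b_def intro!: eq_matI)
  then have "nc_eval s p a = nc_eval s p (\<lambda>i. blk 0 s (b i))"
    using assms(1) by (intro nc_eval_cong) auto
  also have "\<dots> = blk 0 s (nc_eval r p b)"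
    using assms bUT by (intro blk_nc_eval[symmetric]) auto
  also have "nc_eval r p b = 0\<^sub>m r r"
    using assms(2) bUT unfolding nc_vanishes_def nc_image_def by blast
  also have "blk 0 s (0\<^sub>m r r) = 0\<^sub>m s s"
    using assms(3) by (intro eq_matI) auto
  finally show ?thesis .
qed

lemma part1:
  fixes p :: "'a::comm_ring_1 ncpoly"
  assumes "nc_vars m p" "nc_vanishes m r p" "1 \<le> r" "\<forall>i<m. a i \<in> UT n"
  shows "nc_eval n p a \<in> UT_pow n (r - 1)"
  unfolding UT_pow_def
proof (intro CollectI conjI allI impI)
  show "nc_eval n p a \<in> carrier_mat n n" by simp
  fix i j assume ij: "i < n" "j < n" "int j - int i \<le> int (r - 1)"
  show "nc_eval n p a $$ (i,j) = 0"
  proof (cases "j < i")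
    case True
    then show ?thesis using nc_eval_UT[OF assms(1,4)] ij by (auto simp: UT_iff)
  next
    case False
    define k where "k = j - i + 1"
    have k: "i + k \<le> n" "k \<le> r" "0 < k" "j = i + (j - i)" "j - i < k" using ij False assms(3) by (auto simp: k_def)
    have "nc_eval n p a $$ (i + 0, i + (j - i)) = nc_eval k p (\<lambda>l. blk i k (a l)) $$ (0, j - i)"
      using k assms by (intro nc_eval_entry_blk) auto
    also have "nc_eval k p (\<lambda>l. blk i k (a l)) = 0\<^sub>m k k"
      using assms k by (intro vanish_down[where r=r]) (auto intro: blk_UT)
    finally show ?thesis using k by simp
  qed
qed



lemma word_prod_poly:
  fixes A C :: "nat \<Rightarrow> 'a::comm_ring_1 mat"
  assumes "\<forall>i\<in>set w. A i \<in> carrier_mat n n \<and> C i \<in> carrier_mat n n"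
  shows "\<exists>Q. \<forall>t u v. u < n \<longrightarrow> v < n \<longrightarrow> word_prod n (\<lambda>i. A i + t \<cdot>\<^sub>m C i) w $$ (u,v) = poly (Q u v) t"
  using assms
proof (induction w)
  case Nil
  show ?case by (rule exI[of _ "\<lambda>u v. [:(if u = v then 1 else 0):]"]) auto
next
  case (Cons k w)
  then obtain Q where Q: "\<And>t u v. u < n \<Longrightarrow> v < n \<Longrightarrow> word_prod n (\<lambda>i. A i + t \<cdot>\<^sub>m C i) w $$ (u,v) = poly (Q u v) t"
    by auto
  have ck: "A k \<in> carrier_mat n n" "C k \<in> carrier_mat n n" using Cons.prems by auto
  show ?case
  proof (rule exI[of _ "\<lambda>u v. \<Sum>z<n. [:A k $$ (u,z), C k $$ (u,z):] * Q z v"], intro allI impI)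
    fix t u v assume uv: "u < n" "v < n"
    have c1: "A k + t \<cdot>\<^sub>m C k \<in> carrier_mat n n" using ck by auto
    have c2: "word_prod n (\<lambda>i. A i + t \<cdot>\<^sub>m C i) w \<in> carrier_mat n n"
      using Cons.prems by (intro word_prod_carrier) auto
    have "word_prod n (\<lambda>i. A i + t \<cdot>\<^sub>m C i) (k # w) $$ (u,v)
        = (\<Sum>z<n. (A k + t \<cdot>\<^sub>m C k) $$ (u,z) * word_prod n (\<lambda>i. A i + t \<cdot>\<^sub>m C i) w $$ (z,v))"
      using uv by (simp del: index_mult_mat add: mult_entry[OF c1 c2])
    also have "\<dots> = (\<Sum>z<n. (A k $$ (u,z) + t * C k $$ (u,z)) * poly (Q z v) t)"
      using uv ck by (intro sum.cong) (auto simp: Q)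
    also have "\<dots> = poly (\<Sum>z<n. [:A k $$ (u,z), C k $$ (u,z):] * Q z v) t"
      by (simp add: poly_sum algebra_simps)
    finally show "word_prod n (\<lambda>i. A i + t \<cdot>\<^sub>m C i) (k # w) $$ (u,v) = poly (\<Sum>z<n. [:A k $$ (u,z), C k $$ (u,z):] * Q z v) t" .
  qed
qed

lemma nc_eval_poly:
  fixes A C :: "nat \<Rightarrow> 'a::comm_ring_1 mat"
  assumes "nc_vars m p" "\<forall>i<m. A i \<in> carrier_mat n n \<and> C i \<in> carrier_mat n n" "u < n" "v < n"
  shows "\<exists>q. \<forall>t. nc_eval n p (\<lambda>i. A i + t \<cdot>\<^sub>m C i) $$ (u,v) = poly q t"
proof -
  have "\<forall>w\<in>Poly_Mapping.keys p. \<exists>Q. \<forall>t u v. u < n \<longrightarrow> v < n \<longrightarrow> word_prod n (\<lambda>i. A i + t \<cdot>\<^sub>m C i) w $$ (u,v) = poly (Q u v) t"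
  proof
    fix w assume "w \<in> Poly_Mapping.keys p"
    then have "set w \<subseteq> {..<m}" using assms(1) by (auto simp: nc_vars_def)
    then show "\<exists>Q. \<forall>t u v. u < n \<longrightarrow> v < n \<longrightarrow> word_prod n (\<lambda>i. A i + t \<cdot>\<^sub>m C i) w $$ (u,v) = poly (Q u v) t"
      using assms(2) by (intro word_prod_poly) auto
  qed
  then obtain QQ where QQ: "\<And>w t u v. w\<in>Poly_Mapping.keys p \<Longrightarrow> u < n \<Longrightarrow> v < n \<Longrightarrow>
      word_prod n (\<lambda>i. A i + t \<cdot>\<^sub>m C i) w $$ (u,v) = poly (QQ w u v) t"
    by metis
  show ?thesis
  proof (rule exI[of _ "\<Sum>w\<in>Poly_Mapping.keys p. smult (Poly_Mapping.lookup p w) (QQ w u v)"], rule allI)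
    fix t
    show "nc_eval n p (\<lambda>i. A i + t \<cdot>\<^sub>m C i) $$ (u,v) = poly (\<Sum>w\<in>Poly_Mapping.keys p. smult (Poly_Mapping.lookup p w) (QQ w u v)) t"
      using assms(3,4) by (simp add: nc_eval_entry poly_sum QQ)
  qed
qed

lemma order_entry:
  fixes p :: "'a::comm_ring_1 ncpoly"
  assumes "nc_vars m p" "nc_vanishes m r p" "1 \<le> r" "\<not> nc_vanishes m (r+1) p"
  shows "\<exists>a0. (\<forall>i<m. a0 i \<in> UT (r+1)) \<and> nc_eval (r+1) p a0 $$ (0,r) \<noteq> 0"
proof -
  have "\<exists>a0. (\<forall>i<m. a0 i \<in> UT (r+1)) \<and> nc_eval (r+1) p a0 \<noteq> 0\<^sub>m (r+1) (r+1)"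
  proof (rule ccontr)
    assume "\<not> ?thesis"
    then have h: "\<forall>a0. (\<forall>i<m. a0 i \<in> UT (r+1)) \<longrightarrow> nc_eval (r+1) p a0 = 0\<^sub>m (r+1) (r+1)" by blast
    have "nc_image m (r+1) p \<subseteq> {0\<^sub>m (r+1) (r+1)}"
    proof
      fix X assume "X \<in> nc_image m (r+1) p"
      then obtain a where "X = nc_eval (r+1) p a" "\<forall>i<m. a i \<in> UT (r+1)" unfolding nc_image_def by blast
      then show "X \<in> {0\<^sub>m (r+1) (r+1)}" using h by simp
    qed
    moreover have "nc_eval (r+1) p (\<lambda>_. 1\<^sub>m (r+1)) \<in> nc_image m (r+1) p"
      unfolding nc_image_def by (rule CollectI, rule exI[of _ "\<lambda>_. 1\<^sub>m (r+1)"]) (simp add: UT_one)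
    ultimately have "nc_image m (r+1) p = {0\<^sub>m (r+1) (r+1)}" by (metis subset_singletonD empty_iff)
    with assms(4) show False by (simp add: nc_vanishes_def)
  qed
  then obtain a0 where a0: "\<forall>i<m. a0 i \<in> UT (r+1)" "nc_eval (r+1) p a0 \<noteq> 0\<^sub>m (r+1) (r+1)"
    by blast
  have P1: "nc_eval (r+1) p a0 \<in> UT_pow (r+1) (r - 1)"
    using assms a0 by (intro part1) auto
  show ?thesis
  proof (rule exI[of _ a0], intro conjI)
    show "\<forall>i<m. a0 i \<in> UT (r + 1)" using a0 by auto
    show "nc_eval (r+1) p a0 $$ (0,r) \<noteq> 0"
    proof
      assume z: "nc_eval (r+1) p a0 $$ (0,r) = 0"
      have "nc_eval (r+1) p a0 = 0\<^sub>m (r+1) (r+1)"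
      proof (intro eq_matI)
        fix i j assume "i < dim_row (0\<^sub>m (r+1) (r+1))" "j < dim_col (0\<^sub>m (r+1) (r+1))"
        then have ij: "i < r+1" "j < r+1" by auto
        show "nc_eval (r+1) p a0 $$ (i,j) = 0\<^sub>m (r+1) (r+1) $$ (i,j)"
        proof (cases "i = 0 \<and> j = r")
          case True then show ?thesis using z by simp
        next
          case False
          then have "int j - int i \<le> int (r - 1)" using ij by auto
          then show ?thesis using P1 ij by (auto simp: UT_pow_def)
        qed
      qed auto
      then show False using a0 by simp
    qed
  qed
qed

lemma exists_generic:
  fixes p :: "'a::field ncpoly"
  assumes vars: "nc_vars m p" and inf: "infinite (UNIV :: 'a set)"
    and a0: "\<forall>i<m. a0 i \<in> UT (r+1)" and c: "nc_eval (r+1) p a0 $$ (0,r) \<noteq> 0"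
  shows "\<exists>A. (\<forall>i<m. A i \<in> UT n) \<and> (\<forall>x. x + r < n \<longrightarrow> nc_eval n p A $$ (x,x+r) \<noteq> 0)"
proof -
  have "\<forall>j. j + r \<le> n \<longrightarrow> (\<exists>A. (\<forall>i<m. A i \<in> UT n) \<and> (\<forall>x<j. nc_eval n p A $$ (x,x+r) \<noteq> 0))"
  proof (intro allI)
    fix j show "j + r \<le> n \<longrightarrow> (\<exists>A. (\<forall>i<m. A i \<in> UT n) \<and> (\<forall>x<j. nc_eval n p A $$ (x,x+r) \<noteq> 0))"
    proof (induction j)
      case 0 show ?case by (intro impI exI[of _ "\<lambda>_. 1\<^sub>m n"]) (auto simp: UT_one)
    next
      case (Suc j)
      show ?case
      proof
        assume jn: "Suc j + r \<le> n"
        then obtain A where A: "\<forall>i<m. A i \<in> UT n" "\<forall>x<j. nc_eval n p A $$ (x,x+r) \<noteq> 0"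
          using Suc.IH by auto
        define C where "C i = mat n n (\<lambda>(u,v). if j \<le> u \<and> u \<le> j+r \<and> j \<le> v \<and> v \<le> j + r
            then a0 i $$ (u - j, v - j) - A i $$ (u,v) else 0)" for i
        have CUT: "\<forall>i<m. C i \<in> UT n"
        proof (intro allI impI)
          fix i assume "i < m"
          then have "a0 i \<in> UT (r+1)" "A i \<in> UT n" using a0 A by auto
          then show "C i \<in> UT n" unfolding UT_iff C_def by auto
        qed
        have car: "\<forall>i<m. A i \<in> carrier_mat n n \<and> C i \<in> carrier_mat n n"
          using A CUT by (auto simp: UT_iff)
        define E where "E t = nc_eval n p (\<lambda>i. A i + t \<cdot>\<^sub>m C i)" for t
        have EUT: "\<forall>i<m. A i + t \<cdot>\<^sub>m C i \<in> UT n" for t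
          using A CUT by (auto simp: UT_iff)
        have "\<forall>x\<in>{..j}. \<exists>q. (\<forall>t. E t $$ (x,x+r) = poly q t) \<and> q \<noteq> 0"
        proof
          fix x assume x: "x \<in> {..j}"
          obtain q where q: "\<And>t. E t $$ (x,x+r) = poly q t"
            using nc_eval_poly[OF vars car, of x "x+r"] x jn unfolding E_def by auto
          have "q \<noteq> 0"
          proof (cases "x < j")
            case True
            have "E 0 = nc_eval n p A" unfolding E_def
              using car by (intro nc_eval_cong[OF vars] allI impI eq_matI) auto
            moreover have "poly q 0 = E 0 $$ (x,x+r)" using q by simp
            ultimately have "poly q 0 \<noteq> 0" using A(2) True by simp
            then show ?thesis by auto
          next
            case False then have xj: "x = j" using x by auto
            have "E 1 $$ (j + 0, j + r) = nc_eval (r+1) p (\<lambda>i. blk j (r+1) (A i + 1 \<cdot>\<^sub>m C i)) $$ (0, r)"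
              unfolding E_def using jn by (intro nc_eval_entry_blk[OF vars EUT]) auto
            also have "nc_eval (r+1) p (\<lambda>i. blk j (r+1) (A i + 1 \<cdot>\<^sub>m C i)) = nc_eval (r+1) p a0"
            proof (intro nc_eval_cong[OF vars] allI impI)
              fix i assume "i < m"
              then have "a0 i \<in> UT (r+1)" "A i \<in> UT n" using a0 A by auto
              then have ca: "a0 i \<in> carrier_mat (r+1) (r+1)" "A i \<in> carrier_mat n n" by (auto simp: UT_iff)
              show "blk j (r+1) (A i + 1 \<cdot>\<^sub>m C i) = a0 i"
              proof (rule eq_matI)
                fix u v assume "u < dim_row (a0 i)" "v < dim_col (a0 i)"
                then have uv: "u < r+1" "v < r+1" using ca by auto
                then have uvn: "j + u < n" "j + v < n" using jn by auto
                have "C i $$ (j+u, j+v) = a0 i $$ (u,v) - A i $$ (j+u,j+v)"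
                  using uvn uv unfolding C_def by simp
                then show "blk j (r+1) (A i + 1 \<cdot>\<^sub>m C i) $$ (u,v) = a0 i $$ (u,v)"
                  using uv uvn ca by (simp add: C_def)
              qed (use ca in auto)
            qed
            finally have e1: "E 1 $$ (j, j+r) = nc_eval (r+1) p a0 $$ (0,r)" by simp
            have "poly q 1 = E 1 $$ (x,x+r)" using q by simp
            then have "poly q 1 \<noteq> 0" using e1 c xj by simp
            then show ?thesis by auto
          qed
          then show "\<exists>q. (\<forall>t. E t $$ (x,x+r) = poly q t) \<and> q \<noteq> 0" using q by blast
        qed
        then obtain qq where qq: "\<And>x t. x \<le> j \<Longrightarrow> E t $$ (x,x+r) = poly (qq x) t"
          "\<And>x. x \<le> j \<Longrightarrow> qq x \<noteq> 0"
          by (metis atMost_iff)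
        have fin: "finite (\<Union>x\<in>{..j}. {t. poly (qq x) t = 0})"
          using qq(2) by (auto intro: poly_roots_finite)
        obtain t where t: "t \<notin> (\<Union>x\<in>{..j}. {t. poly (qq x) t = 0})"
          using ex_new_if_finite[OF inf fin] by auto
        show "\<exists>A. (\<forall>i<m. A i \<in> UT n) \<and> (\<forall>x<Suc j. nc_eval n p A $$ (x,x+r) \<noteq> 0)"
        proof (rule exI[of _ "\<lambda>i. A i + t \<cdot>\<^sub>m C i"], intro conjI allI impI)
          show "\<And>i. i < m \<Longrightarrow> A i + t \<cdot>\<^sub>m C i \<in> UT n" using EUT by auto
          fix x assume "x < Suc j"
          then show "nc_eval n p (\<lambda>i. A i + t \<cdot>\<^sub>m C i) $$ (x, x + r) \<noteq> 0"
            using t qq(1)[of x t] unfolding E_def by auto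
        qed
      qed
    qed
  qed
  show ?thesis
  proof (cases "r \<le> n")
    case True
    then obtain A where A: "\<forall>i<m. A i \<in> UT n" "\<forall>x<n-r. nc_eval n p A $$ (x,x+r) \<noteq> 0"
      using \<open>\<forall>j. j + r \<le> n \<longrightarrow> _\<close>[rule_format, of "n-r"] by auto
    show ?thesis using A by (intro exI[of _ A]) auto
  next
    case False
    then show ?thesis by (intro exI[of _ "\<lambda>_. 1\<^sub>m n"]) (auto simp: UT_one)
  qed
qed



lemma mult_one_left_assoc:
  fixes X :: "'a::semiring_1 mat"
  assumes "g \<in> carrier_mat n n" "h \<in> carrier_mat n n" "X \<in> carrier_mat n n" "h * g = 1\<^sub>m n"
  shows "h * (g * X) = X"
proof -
  have "h * (g * X) = (h * g) * X" by (rule assoc_mult_mat[OF assms(2,1,3), symmetric])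
  also have "\<dots> = 1\<^sub>m n * X" by (simp only: assms(4))
  also have "\<dots> = X" using assms(3) by (rule left_mult_one_mat)
  finally show ?thesis .
qed

lemma word_prod_conj:
  fixes a :: "nat \<Rightarrow> 'a::comm_ring_1 mat"
  assumes "\<forall>i\<in>set w. a i \<in> carrier_mat n n" "g \<in> carrier_mat n n" "h \<in> carrier_mat n n"
    "g * h = 1\<^sub>m n" "h * g = 1\<^sub>m n"
  shows "word_prod n (\<lambda>i. g * a i * h) w = g * word_prod n a w * h"
  using assms(1)
proof (induction w)
  case Nil then show ?case using assms by simp
next
  case (Cons k w)
  have W: "word_prod n a w \<in> carrier_mat n n" using Cons.prems by (intro word_prod_carrier) auto
  have A: "a k \<in> carrier_mat n n" using Cons.prems by auto
  have "word_prod n (\<lambda>i. g * a i * h) (k # w) = (g * a k * h) * (g * word_prod n a w * h)"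
    using Cons by simp
  also have "\<dots> = g * a k * (h * (g * (word_prod n a w * h)))"
    using assms(2,3) A W by (simp add: assoc_mult_mat[of _ n n _ n _ n])
  also have "h * (g * (word_prod n a w * h)) = word_prod n a w * h"
    using assms A W by (intro mult_one_left_assoc) auto
  also have "g * a k * (word_prod n a w * h) = g * (a k * word_prod n a w) * h"
    using assms(2,3) A W by (simp add: assoc_mult_mat[of _ n n _ n _ n])
  finally show ?case by simp
qed

lemma triple_entry:
  assumes "g \<in> carrier_mat n n" "M \<in> carrier_mat n n" "h \<in> carrier_mat n n" "i < n" "j < n"
  shows "(g * M * h) $$ (i,j) = (\<Sum>z<n. \<Sum>y<n. g $$ (i,y) * M $$ (y,z) * h $$ (z,j))"
proof -
  have gM: "g * M \<in> carrier_mat n n" using assms by auto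
  show ?thesis using assms
    by (simp del: index_mult_mat assoc_mult_mat add: mult_entry[OF gM assms(3)] mult_entry[OF assms(1,2)] sum_distrib_right)
qed

lemma nc_eval_conj:
  fixes p :: "'a::comm_ring_1 ncpoly"
  assumes vars: "nc_vars m p" and a: "\<forall>i<m. a i \<in> carrier_mat n n"
    and gh: "g \<in> carrier_mat n n" "h \<in> carrier_mat n n" "g * h = 1\<^sub>m n" "h * g = 1\<^sub>m n"
  shows "nc_eval n p (\<lambda>i. g * a i * h) = g * nc_eval n p a * h"
proof (rule eq_matI)
  fix i j assume "i < dim_row (g * nc_eval n p a * h)" "j < dim_col (g * nc_eval n p a * h)"
  then have ij: "i < n" "j < n" using gh by auto
  have W: "\<And>w. w \<in> Poly_Mapping.keys p \<Longrightarrow> word_prod n (\<lambda>i. g * a i * h) w = g * word_prod n a w * h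
      \<and> word_prod n a w \<in> carrier_mat n n"
  proof -
    fix w assume "w \<in> Poly_Mapping.keys p"
    then have "set w \<subseteq> {..<m}" using vars by (auto simp: nc_vars_def)
    then show "word_prod n (\<lambda>i. g * a i * h) w = g * word_prod n a w * h \<and> word_prod n a w \<in> carrier_mat n n"
      using a gh by (auto intro!: word_prod_conj word_prod_carrier)
  qed
  let ?c = "Poly_Mapping.lookup p"
  have "nc_eval n p (\<lambda>i. g * a i * h) $$ (i,j) = (\<Sum>w\<in>Poly_Mapping.keys p. ?c w * (g * word_prod n a w * h) $$ (i,j))"
    using ij W by (simp add: nc_eval_entry)
  also have "\<dots> = (\<Sum>w\<in>Poly_Mapping.keys p. \<Sum>z<n. \<Sum>y<n. ?c w * (g $$ (i,y) * word_prod n a w $$ (y,z) * h $$ (z,j)))"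
    using ij W gh by (intro sum.cong refl) (simp del: index_mult_mat assoc_mult_mat add: triple_entry[OF gh(1) _ gh(2) ij] sum_distrib_left)
  also have "\<dots> = (\<Sum>z<n. \<Sum>y<n. \<Sum>w\<in>Poly_Mapping.keys p. ?c w * (g $$ (i,y) * word_prod n a w $$ (y,z) * h $$ (z,j)))"
    by (subst sum.swap, rule sum.cong, rule refl, rule sum.swap)
  also have "\<dots> = (\<Sum>z<n. \<Sum>y<n. g $$ (i,y) * nc_eval n p a $$ (y,z) * h $$ (z,j))"
    by (intro sum.cong refl) (simp add: nc_eval_entry sum_distrib_left sum_distrib_right mult_ac)
  also have "\<dots> = (g * nc_eval n p a * h) $$ (i,j)"
    using ij gh by (simp del: index_mult_mat assoc_mult_mat add: triple_entry[OF gh(1) _ gh(2) ij])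
  finally show "nc_eval n p (\<lambda>i. g * a i * h) $$ (i,j) = (g * nc_eval n p a * h) $$ (i,j)" .
qed (use gh in auto)

lemma nc_image_conj:
  fixes p :: "'a::comm_ring_1 ncpoly"
  assumes vars: "nc_vars m p" and Y: "Y \<in> nc_image m n p"
    and gh: "g \<in> UT n" "h \<in> UT n" "g * h = 1\<^sub>m n" "h * g = 1\<^sub>m n"
  shows "g * Y * h \<in> nc_image m n p"
proof -
  obtain a where a: "Y = nc_eval n p a" "\<forall>i<m. a i \<in> UT n" using Y unfolding nc_image_def by blast
  have c: "g \<in> carrier_mat n n" "h \<in> carrier_mat n n" "\<forall>i<m. a i \<in> carrier_mat n n"
    using gh a by (auto simp: UT_iff)
  have "g * Y * h = nc_eval n p (\<lambda>i. g * a i * h)"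
    using nc_eval_conj[OF vars c(3) c(1,2) gh(3,4)] a by simp
  moreover have "\<forall>i<m. g * a i * h \<in> UT n" using a gh by (auto intro!: UT_mult)
  ultimately show ?thesis unfolding nc_image_def by blast
qed

definition emat :: "nat \<Rightarrow> nat \<Rightarrow> nat \<Rightarrow> 'a::comm_ring_1 \<Rightarrow> 'a mat" where
  "emat n i q t = mat n n (\<lambda>(u,v). if u = v then 1 else if u = i \<and> v = q then t else 0)"

definition dmat :: "nat \<Rightarrow> (nat \<Rightarrow> 'a::comm_ring_1) \<Rightarrow> 'a mat" where
  "dmat n d = mat n n (\<lambda>(u,v). if u = v then d u else 0)"

lemma elem_carrier[simp]: "emat n i q t \<in> carrier_mat n n" by (simp add: emat_def)
lemma dmat_carrier[simp]: "dmat n d \<in> carrier_mat n n" by (simp add: dmat_def)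
lemma emat_dim[simp]: "dim_row (emat n i q t) = n" "dim_col (emat n i q t) = n" by (simp_all add: emat_def)
lemma dmat_dim[simp]: "dim_row (dmat n d) = n" "dim_col (dmat n d) = n" by (simp_all add: dmat_def)

lemma elem_left:
  assumes "M \<in> carrier_mat n n" "x < n" "y < n" "i < n" "q < n" "i \<noteq> q"
  shows "(emat n i q t * M) $$ (x,y) = M $$ (x,y) + (if x = i then t * M $$ (q,y) else 0)"
proof -
  have "(emat n i q t * M) $$ (x,y) = (\<Sum>z<n. emat n i q t $$ (x,z) * M $$ (z,y))"
    using assms by (simp del: index_mult_mat add: mult_entry)
  also have "\<dots> = (\<Sum>z<n. (if z = x then M $$ (x,y) else 0) + (if x = i \<and> z = q then t * M $$ (q,y) else 0))"
    using assms by (intro sum.cong refl) (auto simp: emat_def)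
  also have "\<dots> = M $$ (x,y) + (if x = i then t * M $$ (q,y) else 0)"
    using assms by (simp add: sum.distrib)
  finally show ?thesis .
qed

lemma elem_right:
  assumes "M \<in> carrier_mat n n" "x < n" "y < n" "i < n" "q < n" "i \<noteq> q"
  shows "(M * emat n i q t) $$ (x,y) = M $$ (x,y) + (if y = q then t * M $$ (x,i) else 0)"
proof -
  have "(M * emat n i q t) $$ (x,y) = (\<Sum>z<n. M $$ (x,z) * emat n i q t $$ (z,y))"
    using assms by (simp del: index_mult_mat add: mult_entry)
  also have "\<dots> = (\<Sum>z<n. (if z = y then M $$ (x,y) else 0) + (if z = i \<and> y = q then t * M $$ (x,i) else 0))"
    using assms by (intro sum.cong refl) (auto simp: emat_def)
  also have "\<dots> = M $$ (x,y) + (if y = q then t * M $$ (x,i) else 0)"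
    using assms by (simp add: sum.distrib)
  finally show ?thesis .
qed

lemma dmat_left:
  assumes "M \<in> carrier_mat n n" "x < n" "y < n"
  shows "(dmat n d * M) $$ (x,y) = d x * M $$ (x,y)"
proof -
  have "(dmat n d * M) $$ (x,y) = (\<Sum>z<n. dmat n d $$ (x,z) * M $$ (z,y))"
    using assms by (simp del: index_mult_mat add: mult_entry)
  also have "\<dots> = (\<Sum>z<n. if z = x then d x * M $$ (x,y) else 0)"
    using assms by (intro sum.cong refl) (auto simp: dmat_def)
  finally show ?thesis using assms by simp
qed

lemma dmat_right:
  assumes "M \<in> carrier_mat n n" "x < n" "y < n"
  shows "(M * dmat n d) $$ (x,y) = M $$ (x,y) * d y"
proof -
  have "(M * dmat n d) $$ (x,y) = (\<Sum>z<n. M $$ (x,z) * dmat n d $$ (z,y))"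
    using assms by (simp del: index_mult_mat add: mult_entry)
  also have "\<dots> = (\<Sum>z<n. if z = y then M $$ (x,y) * d y else 0)"
    using assms by (intro sum.cong refl) (auto simp: dmat_def)
  finally show ?thesis using assms by simp
qed

lemma elem_UT: "i < q \<Longrightarrow> emat n i q t \<in> UT n"
  by (auto simp: UT_iff emat_def)
lemma dmat_UT: "dmat n d \<in> UT n"
  by (auto simp: UT_iff dmat_def)

lemma elem_inv: assumes "i < n" "q < n" "i \<noteq> q"
  shows "emat n i q t * emat n i q (-t) = 1\<^sub>m n"
proof (rule eq_matI)
  fix x y assume "x < dim_row (1\<^sub>m n)" "y < dim_col (1\<^sub>m n)"
  then have xy: "x < n" "y < n" by auto
  show "(emat n i q t * emat n i q (-t)) $$ (x,y) = 1\<^sub>m n $$ (x,y)"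
    using xy assms by (subst elem_left) (auto simp: emat_def)
qed auto

lemma dmat_inv: assumes "\<forall>u<n. d u \<noteq> (0::'a::field)"
  shows "dmat n d * dmat n (\<lambda>u. inverse (d u)) = 1\<^sub>m n"
proof (rule eq_matI)
  fix x y assume "x < dim_row (1\<^sub>m n)" "y < dim_col (1\<^sub>m n)"
  then have xy: "x < n" "y < n" by auto
  show "(dmat n d * dmat n (\<lambda>u. inverse (d u))) $$ (x,y) = 1\<^sub>m n $$ (x,y)"
    using xy assms by (subst dmat_left) (auto simp: dmat_def)
qed auto

lemma elem_conj_entry:
  assumes "Y \<in> carrier_mat n n" "x < n" "y < n" "i < n" "q < n" "i \<noteq> q"
  shows "(emat n i q t * Y * emat n i q (-t)) $$ (x,y) =
    Y $$ (x,y) + (if x = i then t * Y $$ (q,y) else 0)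
    - (if y = q then t * (Y $$ (x,i) + (if x = i then t * Y $$ (q,i) else 0)) else 0)"
proof -
  have c: "emat n i q t * Y \<in> carrier_mat n n" using assms by auto
  show ?thesis using assms
    by (simp del: index_mult_mat add: elem_right[OF c] elem_left[OF assms(1)] algebra_simps)
qed

lemma dmat_conj_entry:
  assumes "Y \<in> carrier_mat n n" "x < n" "y < n"
  shows "(dmat n d * Y * dmat n e) $$ (x,y) = d x * Y $$ (x,y) * e y"
proof -
  have c: "dmat n d * Y \<in> carrier_mat n n" using assms by auto
  show ?thesis using assms by (simp del: index_mult_mat add: dmat_right[OF c] dmat_left[OF assms(1)])
qed



definition goodY :: "nat \<Rightarrow> nat \<Rightarrow> 'a::comm_ring_1 ncpoly \<Rightarrow> nat \<Rightarrow> 'a mat \<Rightarrow> 'a mat \<Rightarrow> bool" where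
  "goodY m n p r X Y \<longleftrightarrow> Y \<in> nc_image m n p \<and> Y \<in> UT_pow n (r-1) \<and> (\<forall>x. x + r < n \<longrightarrow> Y $$ (x,x+r) = X $$ (x,x+r))"

definition agree :: "nat \<Rightarrow> nat \<Rightarrow> nat \<Rightarrow> 'a mat \<Rightarrow> 'a mat \<Rightarrow> bool" where
  "agree n s i X Y \<longleftrightarrow> (\<forall>x<n. \<forall>y<n. (int y - int x < int s \<or> (int y - int x = int s \<and> i \<le> x)) \<longrightarrow> Y $$ (x,y) = X $$ (x,y))"

lemma UT_pow_zero: "Y \<in> UT_pow n t \<Longrightarrow> x < n \<Longrightarrow> y < n \<Longrightarrow> int y - int x \<le> int t \<Longrightarrow> Y $$ (x,y) = 0"
  by (auto simp: UT_pow_def)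

lemma stepA:
  fixes X Y :: "'a::field mat"
  assumes vars: "nc_vars m p" and r: "1 \<le> r" "r < s" and i: "i + s < n"
    and X: "X \<in> UT_pow n (r-1)" "\<forall>x. x + r < n \<longrightarrow> X $$ (x,x+r) \<noteq> 0"
    and G: "goodY m n p r X Y" and A: "agree n s (Suc i) X Y"
  shows "\<exists>Y'. goodY m n p r X Y' \<and> agree n s i X Y'"
proof -
  define q where "q = i + s - r"
  have q: "i < q" "q < n" "q + r = i + s" using r i by (auto simp: q_def)
  have YS: "Y \<in> nc_image m n p" and YU: "Y \<in> UT_pow n (r-1)" and Yr: "\<forall>x. x+r<n \<longrightarrow> Y$$(x,x+r) = X$$(x,x+r)"
    using G by (auto simp: goodY_def)
  have Yc: "Y \<in> carrier_mat n n" using YU by (auto simp: UT_pow_def)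
  have Z: "\<And>x y. x<n \<Longrightarrow> y<n \<Longrightarrow> int y - int x < int r \<Longrightarrow> Y $$ (x,y) = 0"
    using YU r by (intro UT_pow_zero) auto
  have qr: "q + r < n" using q i by simp
  have "Y $$ (q, q+r) = X $$ (q, q+r)" using Yr qr by blast
  moreover have "X $$ (q, q+r) \<noteq> 0" using X(2) qr by blast
  ultimately have "Y $$ (q, q+r) \<noteq> 0" by simp
  then have Yq: "Y $$ (q, i+s) \<noteq> 0" using q(3) by simp
  define t where "t = (X $$ (i,i+s) - Y $$ (i,i+s)) / Y $$ (q,i+s)"
  define Y' where "Y' = emat n i q t * Y * emat n i q (-t)"
  have Yqi: "Y $$ (q,i) = 0" using Z q by auto
  have E: "\<And>x y. x<n \<Longrightarrow> y<n \<Longrightarrow> Y' $$ (x,y) = Y$$(x,y) + (if x = i then t * Y$$(q,y) else 0) - (if y = q then t * Y$$(x,i) else 0)"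
    unfolding Y'_def using q Yc Yqi by (subst elem_conj_entry) auto
  have T1: "\<And>y. y < n \<Longrightarrow> int y - int i < int s \<Longrightarrow> Y $$ (q,y) = 0"
    using Z q r by auto
  have T2: "\<And>x. x < n \<Longrightarrow> int q - int x < int s \<Longrightarrow> Y $$ (x,i) = 0"
    using Z q r i by auto
  have near: "\<And>x y. x<n \<Longrightarrow> y<n \<Longrightarrow> int y - int x < int s \<Longrightarrow> Y' $$ (x,y) = Y $$ (x,y)"
  proof -
    fix x y assume xy: "x<n" "y<n" "int y - int x < int s"
    have "(if x = i then t * Y$$(q,y) else 0) = 0" using T1 xy by auto
    moreover have "(if y = q then t * Y$$(x,i) else 0) = 0" using T2 xy by auto
    ultimately show "Y' $$ (x,y) = Y $$ (x,y)" using E xy by simp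
  qed
  have Y'S: "Y' \<in> nc_image m n p"
    unfolding Y'_def using q
    by (intro nc_image_conj[OF vars YS] elem_UT elem_inv) (auto simp: elem_inv[of i n q "-t", simplified])
  have Y'U: "Y' \<in> UT_pow n (r-1)"
    unfolding UT_pow_def
  proof (intro CollectI conjI allI impI)
    show "Y' \<in> carrier_mat n n" unfolding Y'_def using Yc by auto
    fix x y assume xy: "x < n" "y < n" "int y - int x \<le> int (r - 1)"
    then have "int y - int x < int s" using r by auto
    then have "Y' $$ (x,y) = Y $$ (x,y)" using near xy by auto
    then show "Y' $$ (x,y) = 0" using YU xy by (auto simp: UT_pow_def)
  qed
  have Y'r: "\<forall>x. x + r < n \<longrightarrow> Y' $$ (x,x+r) = X $$ (x,x+r)"
    using near Yr r by auto
  have Y'A: "agree n s i X Y'"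
    unfolding agree_def
  proof (intro allI impI)
    fix x y assume xy: "x < n" "y < n" "int y - int x < int s \<or> int y - int x = int s \<and> i \<le> x"
    show "Y' $$ (x,y) = X $$ (x,y)"
    proof (cases "int y - int x < int s")
      case True
      then show ?thesis using near xy A unfolding agree_def by auto
    next
      case False
      then have ys: "y = x + s" "i \<le> x" using xy by auto
      show ?thesis
      proof (cases "x = i")
        case True
        then have "y \<noteq> q" using q ys r by auto
        then have "Y' $$ (x,y) = Y $$ (i,i+s) + t * Y $$ (q,i+s)" using E xy True ys by simp
        also have "\<dots> = X $$ (i,i+s)" using Yq unfolding t_def by (simp add: field_simps)
        finally show ?thesis using True ys by simp
      next
        case False
        then have "y \<noteq> q" using q ys r by auto
        then have "Y' $$ (x,y) = Y $$ (x,y)" using E xy False by simp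
        also have "\<dots> = X $$ (x,y)" using A xy ys False unfolding agree_def by auto
        finally show ?thesis .
      qed
    qed
  qed
  show ?thesis using Y'S Y'U Y'r Y'A by (auto simp: goodY_def)
qed

lemma lemmaA:
  fixes X P :: "'a::field mat"
  assumes vars: "nc_vars m p" and r: "1 \<le> r"
    and X: "X \<in> UT_pow n (r-1)" "\<forall>x. x + r < n \<longrightarrow> X $$ (x,x+r) \<noteq> 0"
    and P: "goodY m n p r X P"
  shows "X \<in> nc_image m n p"
proof -
  have inner: "\<exists>Y'. goodY m n p r X Y' \<and> agree n (s+1) n X Y'"
    if s: "r < s" and Y: "goodY m n p r X Y" "agree n s n X Y" for s Y
  proof -
    have "\<forall>k\<le>n. \<exists>Y. goodY m n p r X Y \<and> agree n s (n - k) X Y"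
    proof (intro allI)
      fix k show "k \<le> n \<longrightarrow> (\<exists>Y. goodY m n p r X Y \<and> agree n s (n - k) X Y)"
      proof (induction k)
        case 0 then show ?case using Y by auto
      next
        case (Suc k)
        show ?case
        proof
          assume k: "Suc k \<le> n"
          then obtain Y1 where Y1: "goodY m n p r X Y1" "agree n s (Suc (n - Suc k)) X Y1"
            using Suc.IH by (metis Suc_diff_Suc Suc_leD Suc_le_lessD)
          show "\<exists>Y. goodY m n p r X Y \<and> agree n s (n - Suc k) X Y"
          proof (cases "n - Suc k + s < n")
            case True
            then show ?thesis using stepA[OF vars r s True X Y1] by blast
          next
            case False
            have "agree n s (n - Suc k) X Y1"
              unfolding agree_def
            proof (intro allI impI)
              fix x y assume xy: "x < n" "y < n" "int y - int x < int s \<or> int y - int x = int s \<and> n - Suc k \<le> x"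
              then have "int y - int x < int s \<or> int y - int x = int s \<and> Suc (n - Suc k) \<le> x"
                using False by auto
              then show "Y1 $$ (x,y) = X $$ (x,y)" using Y1(2) xy unfolding agree_def by auto
            qed
            then show ?thesis using Y1 by blast
          qed
        qed
      qed
    qed
    then obtain Y' where "goodY m n p r X Y'" "agree n s 0 X Y'" by (metis diff_self_eq_0 order_refl)
    moreover have "agree n (s+1) n X Y'"
      unfolding agree_def
    proof (intro allI impI)
      fix x y assume xy: "x < n" "y < n" "int y - int x < int (s + 1) \<or> int y - int x = int (s + 1) \<and> n \<le> x"
      then have "int y - int x < int s \<or> int y - int x = int s \<and> 0 \<le> x" by auto
      then show "Y' $$ (x,y) = X $$ (x,y)" using \<open>agree n s 0 X Y'\<close> xy unfolding agree_def by blast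
    qed
    ultimately show ?thesis by blast
  qed
  have outer: "\<forall>k. \<exists>Y. goodY m n p r X Y \<and> agree n (r+1+k) n X Y"
  proof
    fix k show "\<exists>Y. goodY m n p r X Y \<and> agree n (r+1+k) n X Y"
    proof (induction k)
      case 0
      have "agree n (r+1) n X P"
        unfolding agree_def
      proof (intro allI impI)
        fix x y assume xy: "x < n" "y < n" "int y - int x < int (r + 1) \<or> int y - int x = int (r + 1) \<and> n \<le> x"
        then have d: "int y - int x < int (r+1)" by auto
        show "P $$ (x,y) = X $$ (x,y)"
        proof (cases "int y - int x = int r")
          case True
          then have "y = x + r" by auto
          then show ?thesis using P xy unfolding goodY_def by auto
        next
          case False
          then have "int y - int x \<le> int (r - 1)" using d r by auto
          then show ?thesis using P X xy unfolding goodY_def by (auto simp: UT_pow_zero)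
        qed
      qed
      then show ?case using P by auto
    next
      case (Suc k)
      then obtain Y where "goodY m n p r X Y" "agree n (r+1+k) n X Y" by blast
      from inner[OF _ this] show ?case by auto
    qed
  qed
  obtain Y where Y: "goodY m n p r X Y" "agree n (r+1+n) n X Y" using outer by blast
  have "Y = X"
  proof (rule eq_matI)
    fix x y assume "x < dim_row X" "y < dim_col X"
    then have xy: "x < n" "y < n" using X by (auto simp: UT_pow_def)
    then show "Y $$ (x,y) = X $$ (x,y)" using Y(2) unfolding agree_def by auto
  qed (use X Y in \<open>auto simp: UT_pow_def goodY_def\<close>)
  then show ?thesis using Y by (auto simp: goodY_def)
qed



fun dsc :: "nat \<Rightarrow> (nat \<Rightarrow> 'a::field) \<Rightarrow> nat \<Rightarrow> 'a" where
  "dsc r c x = (if r = 0 \<or> x < r then 1 else dsc r c (x - r) * c (x - r))"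

declare dsc.simps[simp del]

lemma dsc_nz: "(\<forall>x. c x \<noteq> 0) \<Longrightarrow> dsc r c x \<noteq> 0"
proof (induction r c x rule: dsc.induct)
  case (1 r c x) then show ?case by (subst dsc.simps) auto
qed

lemma dsc_step: "0 < r \<Longrightarrow> dsc r c (x + r) = dsc r c x * c x"
  by (subst dsc.simps) simp

lemma lemmaB:
  fixes X P :: "'a::field mat"
  assumes vars: "nc_vars m p" and r: "1 \<le> r"
    and PS: "P \<in> nc_image m n p" and PU: "P \<in> UT_pow n (r-1)" and Pnz: "\<forall>x. x + r < n \<longrightarrow> P $$ (x,x+r) \<noteq> 0"
    and X: "X \<in> UT_pow n (r-1)" "\<forall>x. x + r < n \<longrightarrow> X $$ (x,x+r) \<noteq> 0"
  shows "X \<in> nc_image m n p"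
proof -
  define c where "c x = (if x + r < n then P $$ (x,x+r) / X $$ (x,x+r) else 1)" for x
  have cnz: "\<forall>x. c x \<noteq> 0" using Pnz X(2) by (auto simp: c_def)
  define d where "d = dsc r c"
  have dnz: "\<And>x. d x \<noteq> 0" unfolding d_def using cnz by (rule dsc_nz)
  define Y where "Y = dmat n d * P * dmat n (\<lambda>u. inverse (d u))"
  have Pc: "P \<in> carrier_mat n n" using PU by (auto simp: UT_pow_def)
  have YE: "\<And>x y. x < n \<Longrightarrow> y < n \<Longrightarrow> Y $$ (x,y) = d x * P $$ (x,y) * inverse (d y)"
    unfolding Y_def using Pc by (simp del: index_mult_mat add: dmat_conj_entry[OF Pc])
  have inv2: "dmat n (\<lambda>u. inverse (d u)) * dmat n d = 1\<^sub>m n"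
    using dmat_inv[of n "\<lambda>u. inverse (d u)"] dnz by simp
  have YS: "Y \<in> nc_image m n p"
    unfolding Y_def using dnz
    by (intro nc_image_conj[OF vars PS] dmat_UT dmat_inv inv2) auto
  have YU: "Y \<in> UT_pow n (r-1)"
    unfolding UT_pow_def
  proof (intro CollectI conjI allI impI)
    show "Y \<in> carrier_mat n n" unfolding Y_def using Pc by auto
    fix x y assume xy: "x < n" "y < n" "int y - int x \<le> int (r - 1)"
    then show "Y $$ (x,y) = 0" using YE PU by (simp add: UT_pow_zero)
  qed
  have Yr: "\<forall>x. x + r < n \<longrightarrow> Y $$ (x,x+r) = X $$ (x,x+r)"
  proof (intro allI impI)
    fix x assume x: "x + r < n"
    have nz: "P $$ (x,x+r) \<noteq> 0" "X $$ (x,x+r) \<noteq> 0" using Pnz X(2) x by auto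
    have "d (x + r) = d x * c x" unfolding d_def using r by (simp add: dsc_step)
    then have "Y $$ (x,x+r) = d x * P $$ (x,x+r) * inverse (d x * c x)" using YE x by simp
    also have "\<dots> = X $$ (x,x+r)" using dnz[of x] x nz unfolding c_def by (simp add: field_simps)
    finally show "Y $$ (x,x+r) = X $$ (x,x+r)" .
  qed
  show ?thesis
    by (rule lemmaA[OF vars r X]) (use YS YU Yr in \<open>auto simp: goodY_def\<close>)
qed

definition ins :: "nat \<Rightarrow> nat \<Rightarrow> nat" where "ins s l = (if l < s then l else Suc l)"
definition dl :: "nat \<Rightarrow> nat \<Rightarrow> nat" where "dl s u = (if u < s then u else u - 1)"
definition emb :: "nat \<Rightarrow> nat \<Rightarrow> 'a::zero mat \<Rightarrow> 'a mat" where
  "emb k s M = mat (Suc k) (Suc k) (\<lambda>(u,v). if u = s \<or> v = s then 0 else M $$ (dl s u, dl s v))"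

lemma dl_ins[simp]: "dl s (ins s l) = l" by (simp add: ins_def dl_def)
lemma ins_neq[simp]: "ins s l \<noteq> s" by (simp add: ins_def)
lemma ins_dl: "u \<noteq> s \<Longrightarrow> ins s (dl s u) = u" by (auto simp: ins_def dl_def)
lemma dl_less: "u < Suc k \<Longrightarrow> u \<noteq> s \<Longrightarrow> s \<le> k \<Longrightarrow> dl s u < k" by (auto simp: dl_def)
lemma ins_less: "l < k \<Longrightarrow> ins s l < Suc k" by (auto simp: ins_def)

lemma emb_carrier[simp]: "emb k s M \<in> carrier_mat (Suc k) (Suc k)" by (simp add: emb_def)
lemma emb_dim[simp]: "dim_row (emb k s M) = Suc k" "dim_col (emb k s M) = Suc k" by (simp_all add: emb_def)
lemma emb_entry: "u < Suc k \<Longrightarrow> v < Suc k \<Longrightarrow> emb k s M $$ (u,v) = (if u = s \<or> v = s then 0 else M $$ (dl s u, dl s v))"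
  by (simp add: emb_def)

lemma sum_skip:
  fixes f :: "nat \<Rightarrow> 'a::comm_monoid_add"
  assumes "s \<le> k" "f s = 0"
  shows "(\<Sum>z<Suc k. f z) = (\<Sum>l<k. f (ins s l))"
proof -
  have "(\<Sum>z<Suc k. f z) = (\<Sum>z\<in>{..<Suc k} - {s}. f z)"
    using assms by (intro sum.mono_neutral_right) auto
  also have "\<dots> = (\<Sum>l<k. f (ins s l))"
    by (rule sum.reindex_bij_witness[of _ "ins s" "dl s"]) (use assms in \<open>auto simp: ins_dl dl_less ins_less\<close>)
  finally show ?thesis .
qed

lemma emb_mult:
  fixes A B :: "'a::comm_ring_1 mat"
  assumes "A \<in> carrier_mat k k" "B \<in> carrier_mat k k" "s \<le> k"
  shows "emb k s (A * B) = emb k s A * emb k s B"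
proof (rule eq_matI)
  fix u v assume "u < dim_row (emb k s A * emb k s B)" "v < dim_col (emb k s A * emb k s B)"
  then have uv: "u < Suc k" "v < Suc k" by auto
  have "(emb k s A * emb k s B) $$ (u,v) = (\<Sum>z<Suc k. emb k s A $$ (u,z) * emb k s B $$ (z,v))"
    using uv by (simp del: index_mult_mat add: mult_entry[OF emb_carrier emb_carrier])
  also have "\<dots> = (\<Sum>l<k. emb k s A $$ (u,ins s l) * emb k s B $$ (ins s l,v))"
    using assms uv by (intro sum_skip) (auto simp: emb_entry)
  also have "\<dots> = emb k s (A * B) $$ (u,v)"
  proof (cases "u = s \<or> v = s")
    case True then show ?thesis using uv by (auto simp: emb_entry ins_less)
  next
    case False
    then have "dl s u < k" "dl s v < k" using uv assms dl_less by auto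
    then show ?thesis using False uv assms
      by (simp add: emb_entry ins_less mult_entry[OF assms(1,2)] del: index_mult_mat)
  qed
  finally show "emb k s (A * B) $$ (u,v) = (emb k s A * emb k s B) $$ (u,v)" ..
qed auto

lemma emb_UT:
  assumes "M \<in> UT k" "s \<le> k"
  shows "emb k s M \<in> UT (Suc k)"
  unfolding UT_iff
proof (intro conjI allI impI)
  fix u v assume uv: "u < Suc k" "v < u"
  show "emb k s M $$ (u,v) = 0"
  proof (cases "u = s \<or> v = s")
    case False
    then have "dl s v < dl s u" "dl s u < k" using uv assms by (auto simp: dl_def)
    then show ?thesis using False uv assms by (auto simp: emb_entry UT_iff)
  qed (use uv in \<open>auto simp: emb_entry\<close>)
qed simp

lemma emb_word_prod:
  fixes a :: "nat \<Rightarrow> 'a::comm_ring_1 mat"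
  assumes "\<forall>i\<in>set w. a i \<in> carrier_mat k k" "w \<noteq> []" "s \<le> k"
  shows "word_prod (Suc k) (\<lambda>i. emb k s (a i)) w = emb k s (word_prod k a w)"
  using assms
proof (induction w)
  case Nil then show ?case by simp
next
  case (Cons j w)
  show ?case
  proof (cases "w = []")
    case True
    have "a j \<in> carrier_mat k k" using Cons.prems by auto
    then show ?thesis using True by simp
  next
    case False
    then have IH: "word_prod (Suc k) (\<lambda>i. emb k s (a i)) w = emb k s (word_prod k a w)"
      using Cons by auto
    have "word_prod k a w \<in> carrier_mat k k" using Cons.prems by (intro word_prod_carrier) auto
    then show ?thesis using IH Cons.prems by (simp add: emb_mult)
  qed
qed

lemma emb_nc_eval:
  fixes p :: "'a::comm_ring_1 ncpoly"
  assumes vars: "nc_vars m p" and p0: "Poly_Mapping.lookup p [] = 0"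
    and a: "\<forall>i<m. a i \<in> carrier_mat k k" and s: "s \<le> k"
  shows "nc_eval (Suc k) p (\<lambda>i. emb k s (a i)) = emb k s (nc_eval k p a)"
proof (rule eq_matI)
  fix u v assume "u < dim_row (emb k s (nc_eval k p a))" "v < dim_col (emb k s (nc_eval k p a))"
  then have uv: "u < Suc k" "v < Suc k" by auto
  have W: "\<And>w. w \<in> Poly_Mapping.keys p \<Longrightarrow> word_prod (Suc k) (\<lambda>i. emb k s (a i)) w = emb k s (word_prod k a w)"
  proof -
    fix w assume w: "w \<in> Poly_Mapping.keys p"
    then have "set w \<subseteq> {..<m}" using vars by (auto simp: nc_vars_def)
    moreover have "w \<noteq> []" using w p0 by (auto simp: in_keys_iff)
    ultimately show "word_prod (Suc k) (\<lambda>i. emb k s (a i)) w = emb k s (word_prod k a w)"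
      using a s by (intro emb_word_prod) auto
  qed
  show "nc_eval (Suc k) p (\<lambda>i. emb k s (a i)) $$ (u,v) = emb k s (nc_eval k p a) $$ (u,v)"
  proof (cases "u = s \<or> v = s")
    case True then show ?thesis using uv W by (simp add: nc_eval_entry emb_entry)
  next
    case False
    then have "dl s u < k" "dl s v < k" using uv s dl_less by auto
    then show ?thesis using False uv W by (simp add: nc_eval_entry emb_entry)
  qed
qed auto

lemma nc_eval_zero:
  fixes p :: "'a::comm_ring_1 ncpoly"
  assumes p0: "Poly_Mapping.lookup p [] = 0"
  shows "nc_eval n p (\<lambda>_. 0\<^sub>m n n) = 0\<^sub>m n n"
proof (rule eq_matI)
  fix u v assume "u < dim_row (0\<^sub>m n n :: 'a mat)" "v < dim_col (0\<^sub>m n n :: 'a mat)"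
  then have uv: "u < n" "v < n" by auto
  have "\<And>w. w \<in> Poly_Mapping.keys p \<Longrightarrow> word_prod n (\<lambda>_. 0\<^sub>m n n) w = (0\<^sub>m n n :: 'a mat)"
  proof -
    fix w assume w: "w \<in> Poly_Mapping.keys p"
    then obtain j w' where "w = j # w'" using p0 by (cases w) (auto simp: in_keys_iff)
    moreover have "word_prod n (\<lambda>_. 0\<^sub>m n n :: 'a mat) w' \<in> carrier_mat n n" by (intro word_prod_carrier) auto
    ultimately show "word_prod n (\<lambda>_. 0\<^sub>m n n) w = (0\<^sub>m n n :: 'a mat)" by (simp add: left_mult_zero_mat)
  qed
  then show "nc_eval n p (\<lambda>_. 0\<^sub>m n n) $$ (u,v) = 0\<^sub>m n n $$ (u,v)" using uv by (simp add: nc_eval_entry)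
qed auto

lemma scale_single:
  fixes Z :: "'a::field mat"
  assumes vars: "nc_vars m p" and ZS: "Z \<in> nc_image m n p" and Zc: "Z \<in> carrier_mat n n"
    and Ze: "\<And>u v. u < n \<Longrightarrow> v < n \<Longrightarrow> Z $$ (u,v) = (if u = a \<and> v = b then c else 0)"
    and ab: "a \<noteq> b" and c: "c \<noteq> 0" and e: "e \<noteq> 0"
  shows "mat n n (\<lambda>(u,v). if u = a \<and> v = b then e else 0) \<in> nc_image m n p"
proof -
  define d where "d u = (if u = a then e / c else 1)" for u
  have dnz: "\<And>x. d x \<noteq> 0" using c e by (auto simp: d_def)
  define Y where "Y = dmat n d * Z * dmat n (\<lambda>u. inverse (d u))"
  have inv2: "dmat n (\<lambda>u. inverse (d u)) * dmat n d = 1\<^sub>m n"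
    using dmat_inv[of n "\<lambda>u. inverse (d u)"] dnz by simp
  have YS: "Y \<in> nc_image m n p"
    unfolding Y_def using dnz
    by (intro nc_image_conj[OF vars ZS] dmat_UT dmat_inv inv2) auto
  have "Y = mat n n (\<lambda>(u,v). if u = a \<and> v = b then e else 0)"
  proof (rule eq_matI)
    fix u v assume "u < dim_row (mat n n (\<lambda>(u,v). if u = a \<and> v = b then e else (0::'a)))"
      "v < dim_col (mat n n (\<lambda>(u,v). if u = a \<and> v = b then e else (0::'a)))"
    then have uv: "u < n" "v < n" by auto
    show "Y $$ (u,v) = mat n n (\<lambda>(u,v). if u = a \<and> v = b then e else 0) $$ (u,v)"
      unfolding Y_def using uv Zc Ze ab c by (simp del: index_mult_mat add: dmat_conj_entry[OF Zc] d_def)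
  qed (auto simp: Y_def)
  then show ?thesis using YS by simp
qed



lemma emb_single:
  fixes p :: "'a::comm_ring_1 ncpoly"
  assumes vars: "nc_vars m p" and p0: "Poly_Mapping.lookup p [] = 0"
    and a0: "\<forall>i<m. a0 i \<in> UT (Suc k)"
    and Q0e: "\<forall>i<Suc k. \<forall>j<Suc k. nc_eval (Suc k) p a0 $$ (i,j) = (if i = 0 \<and> j = k then c else 0)"
    and s: "s \<le> Suc k"
  shows "\<exists>Z. Z \<in> nc_image m (Suc (Suc k)) p \<and> Z \<in> carrier_mat (Suc (Suc k)) (Suc (Suc k)) \<and>
    (\<forall>u<Suc (Suc k). \<forall>v<Suc (Suc k). Z $$ (u,v) = (if u = ins s 0 \<and> v = ins s k then c else 0))"
proof -
  define Z where "Z = nc_eval (Suc (Suc k)) p (\<lambda>i. emb (Suc k) s (a0 i))"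
  have ZS: "Z \<in> nc_image m (Suc (Suc k)) p"
    unfolding Z_def nc_image_def using a0 s by (auto intro!: emb_UT)
  have Zemb: "Z = emb (Suc k) s (nc_eval (Suc k) p a0)"
    unfolding Z_def using a0 s by (intro emb_nc_eval[OF vars p0]) (auto simp: UT_iff)
  have Ze: "\<forall>u<Suc (Suc k). \<forall>v<Suc (Suc k). Z $$ (u,v) = (if u = ins s 0 \<and> v = ins s k then c else 0)"
  proof (intro allI impI)
    fix u v assume uv: "u < Suc (Suc k)" "v < Suc (Suc k)"
    show "Z $$ (u,v) = (if u = ins s 0 \<and> v = ins s k then c else 0)"
    proof (cases "u = s \<or> v = s")
      case True
      then show ?thesis using uv unfolding Zemb by (auto simp: emb_entry)
    next
      case False
      have dl: "dl s u < Suc k" "dl s v < Suc k" using False uv s dl_less by auto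
      have iff1: "dl s u = 0 \<longleftrightarrow> u = ins s 0" using False ins_dl[of u s] by auto
      have iff2: "dl s v = k \<longleftrightarrow> v = ins s k" using False ins_dl[of v s] by auto
      show ?thesis using uv False dl Q0e iff1 iff2 unfolding Zemb by (simp add: emb_entry)
    qed
  qed
  show ?thesis using ZS Ze unfolding Zemb by auto
qed

lemma emat_conj_S:
  fixes Y :: "'a::comm_ring_1 mat"
  assumes vars: "nc_vars m p" and YS: "Y \<in> nc_image m n p" and iq: "i < q" "q < n"
  shows "emat n i q t * Y * emat n i q (-t) \<in> nc_image m n p"
  using iq by (intro nc_image_conj[OF vars YS] elem_UT elem_inv) (auto simp: elem_inv[of i n q "-t", simplified])

lemma caseA:
  fixes \<alpha> \<gamma> :: "'a::field"
  assumes vars: "nc_vars m p" and n: "n = r + 2" and r: "1 \<le> r" and a: "\<alpha> \<noteq> 0"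
    and S: "mat n n (\<lambda>(u,v). if u = 0 \<and> v = r then \<alpha> else 0) \<in> nc_image m n p"
  shows "mat n n (\<lambda>(u,v). if u = 0 \<and> v = r then \<alpha> else if u = 0 \<and> v = r+1 then \<gamma> else 0) \<in> nc_image m n p"
proof -
  define Y1 where "Y1 = (mat n n (\<lambda>(u,v). if u = 0 \<and> v = r then \<alpha> else 0) :: 'a mat)"
  define t where "t = - \<gamma> / \<alpha>"
  have Y1c: "Y1 \<in> carrier_mat n n" by (simp add: Y1_def)
  have "emat n r (r+1) t * Y1 * emat n r (r+1) (-t) = mat n n (\<lambda>(u,v). if u = 0 \<and> v = r then \<alpha> else if u = 0 \<and> v = r+1 then \<gamma> else 0)"
  proof (rule eq_matI)
    fix x y assume "x < dim_row (mat n n (\<lambda>(u,v). if u = 0 \<and> v = r then \<alpha> else if u = 0 \<and> v = r+1 then \<gamma> else 0))"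
      "y < dim_col (mat n n (\<lambda>(u,v). if u = 0 \<and> v = r then \<alpha> else if u = 0 \<and> v = r+1 then \<gamma> else 0))"
    then have xy: "x < n" "y < n" by auto
    show "(emat n r (r+1) t * Y1 * emat n r (r+1) (-t)) $$ (x,y) = mat n n (\<lambda>(u,v). if u = 0 \<and> v = r then \<alpha> else if u = 0 \<and> v = r+1 then \<gamma> else 0) $$ (x,y)"
      using xy n r a by (subst elem_conj_entry[OF Y1c]) (auto simp: Y1_def t_def)
  qed auto
  moreover have "emat n r (r+1) t * Y1 * emat n r (r+1) (-t) \<in> nc_image m n p"
    using S n unfolding Y1_def by (intro emat_conj_S[OF vars]) auto
  ultimately show ?thesis by simp
qed

lemma caseB:
  fixes \<beta> \<gamma> :: "'a::field"
  assumes vars: "nc_vars m p" and n: "n = r + 2" and r: "1 \<le> r" and b: "\<beta> \<noteq> 0"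
    and S: "mat n n (\<lambda>(u,v). if u = 1 \<and> v = r+1 then \<beta> else 0) \<in> nc_image m n p"
  shows "mat n n (\<lambda>(u,v). if u = 1 \<and> v = r+1 then \<beta> else if u = 0 \<and> v = r+1 then \<gamma> else 0) \<in> nc_image m n p"
proof -
  define Y1 where "Y1 = (mat n n (\<lambda>(u,v). if u = 1 \<and> v = r+1 then \<beta> else 0) :: 'a mat)"
  define t where "t = \<gamma> / \<beta>"
  have Y1c: "Y1 \<in> carrier_mat n n" by (simp add: Y1_def)
  have "emat n 0 1 t * Y1 * emat n 0 1 (-t) = mat n n (\<lambda>(u,v). if u = 1 \<and> v = r+1 then \<beta> else if u = 0 \<and> v = r+1 then \<gamma> else 0)"
  proof (rule eq_matI)
    fix x y assume "x < dim_row (mat n n (\<lambda>(u,v). if u = 1 \<and> v = r+1 then \<beta> else if u = 0 \<and> v = r+1 then \<gamma> else 0))"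
      "y < dim_col (mat n n (\<lambda>(u,v). if u = 1 \<and> v = r+1 then \<beta> else if u = 0 \<and> v = r+1 then \<gamma> else 0))"
    then have xy: "x < n" "y < n" by auto
    show "(emat n 0 1 t * Y1 * emat n 0 1 (-t)) $$ (x,y) = mat n n (\<lambda>(u,v). if u = 1 \<and> v = r+1 then \<beta> else if u = 0 \<and> v = r+1 then \<gamma> else 0) $$ (x,y)"
      using xy n r b by (subst elem_conj_entry[OF Y1c]) (auto simp: Y1_def t_def)
  qed auto
  moreover have "emat n 0 1 t * Y1 * emat n 0 1 (-t) \<in> nc_image m n p"
    using S n unfolding Y1_def by (intro emat_conj_S[OF vars]) auto
  ultimately show ?thesis by simp
qed



theorem theorem1p3:
  fixes p :: "'a::field ncpoly" and n m r :: nat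
  assumes "n \<ge> 2" and "m \<ge> 1"
    and "infinite (UNIV :: 'a set)"
    and "nc_vars m p"
    and "Poly_Mapping.lookup p [] = 0"
    and "nc_has_order m p r"
    and "1 < r" and "r < n - 1"
  shows "{A + B | A B. A \<in> nc_image m n p \<and> B \<in> nc_image m n p} = UT_pow n (r - 1)
    \<and> (r = n - 2 \<longrightarrow> nc_image m n p = UT_pow n (n - 3))"
proof -
  note vars = assms(4) and inf = assms(3) and p0 = assms(5)
  have r1: "1 \<le> r" using assms(7) by simp
  have V: "nc_vanishes m r p" and NV: "\<not> nc_vanishes m (r+1) p"
    using assms(6,7) unfolding nc_has_order_def by auto
  obtain a0 where a0: "\<forall>i<m. a0 i \<in> UT (r+1)" "nc_eval (r+1) p a0 $$ (0,r) \<noteq> 0"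
    using order_entry[OF vars V r1 NV] by blast
  obtain A where A: "\<forall>i<m. A i \<in> UT n" "\<forall>x. x + r < n \<longrightarrow> nc_eval n p A $$ (x,x+r) \<noteq> 0"
    using exists_generic[OF vars inf a0] by blast
  define P where "P = nc_eval n p A"
  have PS: "P \<in> nc_image m n p" unfolding nc_image_def P_def using A(1) by blast
  have incl: "\<And>Y. Y \<in> nc_image m n p \<Longrightarrow> Y \<in> UT_pow n (r-1)"
  proof -
    fix Y assume "Y \<in> nc_image m n p"
    then obtain a where "Y = nc_eval n p a" "\<forall>i<m. a i \<in> UT n" unfolding nc_image_def by blast
    then show "Y \<in> UT_pow n (r-1)" using part1[OF vars V r1] by simp
  qed
  have PU: "P \<in> UT_pow n (r-1)" using incl PS by simp
  have B: "\<And>X. X \<in> UT_pow n (r-1) \<Longrightarrow> \<forall>x. x + r < n \<longrightarrow> X $$ (x,x+r) \<noteq> 0 \<Longrightarrow> X \<in> nc_image m n p"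
    using lemmaB[OF vars r1 PS PU] A(2) unfolding P_def by blast
  obtain b :: 'a where b: "b \<notin> {0, 1}" using ex_new_if_finite[OF inf, of "{0,1}"] by auto
  define e where "e z = (if z = 1 then b else 1)" for z :: 'a
  have e: "\<And>z. e z \<noteq> 0" "\<And>z. e z \<noteq> z" using b by (auto simp: e_def)
  have claim1: "{A + B | A B. A \<in> nc_image m n p \<and> B \<in> nc_image m n p} = UT_pow n (r - 1)"
  proof (intro equalityI subsetI)
    fix M assume "M \<in> {A + B | A B. A \<in> nc_image m n p \<and> B \<in> nc_image m n p}"
    then obtain A1 B1 where M: "M = A1 + B1" "A1 \<in> UT_pow n (r-1)" "B1 \<in> UT_pow n (r-1)"
      using incl by blast
    then show "M \<in> UT_pow n (r-1)" unfolding UT_pow_def by auto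
  next
    fix X :: "'a mat" assume X: "X \<in> UT_pow n (r-1)"
    then have Xc: "X \<in> carrier_mat n n" by (simp add: UT_pow_def)
    define Y where "Y = mat n n (\<lambda>(x,y). if y = x + r then e (X $$ (x,y)) else 0)"
    have YU: "Y \<in> UT_pow n (r-1)" unfolding UT_pow_def
    proof (intro CollectI conjI allI impI)
      show "Y \<in> carrier_mat n n" by (simp add: Y_def)
      fix x y assume xy: "x < n" "y < n" "int y - int x \<le> int (r - 1)"
      then have "y \<noteq> x + r" using r1 by auto
      then show "Y $$ (x,y) = 0" using xy by (simp add: Y_def)
    qed
    have Yr: "\<forall>x. x + r < n \<longrightarrow> Y $$ (x,x+r) \<noteq> 0" unfolding Y_def using e by simp
    have Yc: "Y \<in> carrier_mat n n" by (simp add: Y_def)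
    have XYU: "X - Y \<in> UT_pow n (r-1)" unfolding UT_pow_def
    proof (intro CollectI conjI allI impI)
      show "X - Y \<in> carrier_mat n n" using Yc by (rule minus_carrier_mat)
      fix x y assume xy: "x < n" "y < n" "int y - int x \<le> int (r - 1)"
      have "(X - Y) $$ (x,y) = X $$ (x,y) - Y $$ (x,y)" using xy Yc by simp
      also have "X $$ (x,y) = 0" using X xy by (simp add: UT_pow_zero)
      also have "Y $$ (x,y) = 0" using YU xy by (simp add: UT_pow_zero)
      finally show "(X - Y) $$ (x,y) = 0" by simp
    qed
    have XYr: "\<forall>x. x + r < n \<longrightarrow> (X - Y) $$ (x,x+r) \<noteq> 0"
    proof (intro allI impI)
      fix x assume x: "x + r < n"
      have "(X - Y) $$ (x,x+r) = X $$ (x,x+r) - e (X $$ (x,x+r))" using x Yc by (simp add: Y_def)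
      then show "(X - Y) $$ (x,x+r) \<noteq> 0" using e(2)[of "X $$ (x,x+r)"] by simp
    qed
    have "X = (X - Y) + Y"
    proof (rule eq_matI)
      fix x y assume "x < dim_row (X - Y + Y)" "y < dim_col (X - Y + Y)"
      then have xy: "x < n" "y < n" using Yc by auto
      then show "X $$ (x,y) = (X - Y + Y) $$ (x,y)" using Yc by simp
    qed (use Xc Yc in auto)
    moreover have "X - Y \<in> nc_image m n p" using B XYU XYr by blast
    moreover have "Y \<in> nc_image m n p" using B YU Yr by blast
    ultimately show "X \<in> {A + B | A B. A \<in> nc_image m n p \<and> B \<in> nc_image m n p}" by blast
  qed
  have claim2: "nc_image m n p = UT_pow n (n - 3)" if rn: "r = n - 2"
  proof -
    have n: "n = r + 2" using rn assms(1,7) by simp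
    have n3: "n - 3 = r - 1" using n by simp
    show ?thesis unfolding n3
    proof (intro equalityI subsetI)
      fix X assume "X \<in> nc_image m n p" then show "X \<in> UT_pow n (r-1)" by (rule incl)
    next
      fix X :: "'a mat" assume X: "X \<in> UT_pow n (r-1)"
      then have Xc: "X \<in> carrier_mat n n" by (simp add: UT_pow_def)
      define \<alpha> where "\<alpha> = X $$ (0,r)"
      define \<beta> where "\<beta> = X $$ (1,r+1)"
      define \<gamma> where "\<gamma> = X $$ (0,r+1)"
      have Xe: "X = mat n n (\<lambda>(u,v). if u = 0 \<and> v = r then \<alpha> else if u = 1 \<and> v = r+1 then \<beta>
                  else if u = 0 \<and> v = r+1 then \<gamma> else 0)"
      proof (rule eq_matI)
        fix u v assume "u < dim_row (mat n n (\<lambda>(u,v). if u = 0 \<and> v = r then \<alpha> else if u = 1 \<and> v = r+1 then \<beta>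
                  else if u = 0 \<and> v = r+1 then \<gamma> else 0))" "v < dim_col (mat n n (\<lambda>(u,v). if u = 0 \<and> v = r then \<alpha> else if u = 1 \<and> v = r+1 then \<beta>
                  else if u = 0 \<and> v = r+1 then \<gamma> else 0))"
        then have uv: "u < n" "v < n" by auto
        show "X $$ (u,v) = mat n n (\<lambda>(u,v). if u = 0 \<and> v = r then \<alpha> else if u = 1 \<and> v = r+1 then \<beta>
                  else if u = 0 \<and> v = r+1 then \<gamma> else 0) $$ (u,v)"
        proof (cases "(u = 0 \<and> v = r) \<or> (u = 1 \<and> v = r+1) \<or> (u = 0 \<and> v = r+1)")
          case True then show ?thesis using uv r1 by (auto simp: \<alpha>_def \<beta>_def \<gamma>_def)
        next
          case False
          then have "int v - int u \<le> int (r - 1)" using uv n r1 by auto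
          then have "X $$ (u,v) = 0" using uv X by (simp add: UT_pow_zero)
          moreover have "mat n n (\<lambda>(u,v). if u = 0 \<and> v = r then \<alpha> else if u = 1 \<and> v = r+1 then \<beta>
                  else if u = 0 \<and> v = r+1 then \<gamma> else 0) $$ (u,v) = 0" using uv False by auto
          ultimately show ?thesis by simp
        qed
      qed (use Xc in auto)
      define Q0 where "Q0 = nc_eval (r+1) p a0"
      have Q0U: "Q0 \<in> UT_pow (r+1) (r-1)" unfolding Q0_def using part1[OF vars V r1] a0(1) by simp
      have Q0e: "\<forall>i<Suc r. \<forall>j<Suc r. nc_eval (Suc r) p a0 $$ (i,j) = (if i = 0 \<and> j = r then Q0 $$ (0,r) else 0)"
      proof (intro allI impI)
        fix i j assume ij: "i < Suc r" "j < Suc r"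
        show "nc_eval (Suc r) p a0 $$ (i,j) = (if i = 0 \<and> j = r then Q0 $$ (0,r) else 0)"
        proof (cases "i = 0 \<and> j = r")
          case False
          then have "int j - int i \<le> int (r - 1)" using ij by auto
          then show ?thesis using Q0U ij False unfolding Q0_def by (simp add: UT_pow_zero)
        qed (simp add: Q0_def)
      qed
      have cnz: "Q0 $$ (0,r) \<noteq> 0" using a0(2) unfolding Q0_def .
      have a0': "\<forall>i<m. a0 i \<in> UT (Suc r)" using a0(1) by simp
      have single: "mat n n (\<lambda>(u,v). if u = ins s 0 \<and> v = ins s r then z else 0) \<in> nc_image m n p"
        if s: "s \<le> Suc r" and z: "z \<noteq> 0" for s z
      proof -
        obtain Z where Z: "Z \<in> nc_image m n p" "Z \<in> carrier_mat n n"
          "\<forall>u<n. \<forall>v<n. Z $$ (u,v) = (if u = ins s 0 \<and> v = ins s r then Q0 $$ (0,r) else 0)"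
          using emb_single[OF vars p0 a0' Q0e s] n by auto
        have "ins s 0 \<noteq> ins s r" using r1 by (auto simp: ins_def)
        then show ?thesis using scale_single[OF vars Z(1,2) _ _ cnz z] Z(3) by blast
      qed
      show "X \<in> nc_image m n p"
      proof (cases "\<alpha> \<noteq> 0 \<and> \<beta> \<noteq> 0")
        case True
        have "\<forall>x. x + r < n \<longrightarrow> X $$ (x,x+r) \<noteq> 0"
        proof (intro allI impI)
          fix x assume "x + r < n"
          then have "x = 0 \<or> x = 1" using n by auto
          then show "X $$ (x,x+r) \<noteq> 0" using True unfolding \<alpha>_def \<beta>_def by auto
        qed
        then show ?thesis using B X by blast
      next
        case False
        show ?thesis
        proof (cases "\<alpha> \<noteq> 0")
          case True
          then have b0: "\<beta> = 0" using False by auto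
          have "mat n n (\<lambda>(u,v). if u = ins (Suc r) 0 \<and> v = ins (Suc r) r then \<alpha> else 0) \<in> nc_image m n p"
            using single True by simp
          moreover have "ins (Suc r) 0 = 0" "ins (Suc r) r = r" by (auto simp: ins_def)
          ultimately have "mat n n (\<lambda>(u,v). if u = 0 \<and> v = r then \<alpha> else 0) \<in> nc_image m n p" by simp
          from caseA[OF vars n r1 True this, of \<gamma>]
          have "mat n n (\<lambda>(u,v). if u = 0 \<and> v = r then \<alpha> else if u = 0 \<and> v = r+1 then \<gamma> else 0) \<in> nc_image m n p" .
          moreover have "mat n n (\<lambda>(u,v). if u = 0 \<and> v = r then \<alpha> else if u = 0 \<and> v = r+1 then \<gamma> else 0) = X"
            unfolding Xe b0 by (intro eq_matI) auto
          ultimately show ?thesis by simp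
        next
          case a0: False
          show ?thesis
          proof (cases "\<beta> \<noteq> 0")
            case True
            have "mat n n (\<lambda>(u,v). if u = ins 0 0 \<and> v = ins 0 r then \<beta> else 0) \<in> nc_image m n p"
              using single True by simp
            moreover have "ins 0 0 = 1" "ins 0 r = r + 1" by (auto simp: ins_def)
            ultimately have "mat n n (\<lambda>(u,v). if u = 1 \<and> v = r+1 then \<beta> else 0) \<in> nc_image m n p" by simp
            from caseB[OF vars n r1 True this, of \<gamma>]
            have "mat n n (\<lambda>(u,v). if u = 1 \<and> v = r+1 then \<beta> else if u = 0 \<and> v = r+1 then \<gamma> else 0) \<in> nc_image m n p" .
            moreover have "mat n n (\<lambda>(u,v). if u = 1 \<and> v = r+1 then \<beta> else if u = 0 \<and> v = r+1 then \<gamma> else 0) = X"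
              using a0 unfolding Xe by (intro eq_matI) auto
            ultimately show ?thesis by simp
          next
            case b0: False
            show ?thesis
            proof (cases "\<gamma> = 0")
              case True
              have "X = 0\<^sub>m n n" using a0 b0 True unfolding Xe by (intro eq_matI) auto
              moreover have "nc_eval n p (\<lambda>_. 0\<^sub>m n n) \<in> nc_image m n p"
                unfolding nc_image_def by (rule CollectI, rule exI[of _ "\<lambda>_. 0\<^sub>m n n"]) (auto simp: UT_iff)
              ultimately show ?thesis using nc_eval_zero[OF p0] by simp
            next
              case False
              have "mat n n (\<lambda>(u,v). if u = ins 1 0 \<and> v = ins 1 r then \<gamma> else 0) \<in> nc_image m n p"
                using single False by simp
              moreover have "ins 1 0 = 0" "ins 1 r = r + 1" using r1 by (auto simp: ins_def)
              ultimately have "mat n n (\<lambda>(u,v). if u = 0 \<and> v = r+1 then \<gamma> else 0) \<in> nc_image m n p" by simp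
              moreover have "mat n n (\<lambda>(u,v). if u = 0 \<and> v = r+1 then \<gamma> else 0) = X"
                using a0 b0 unfolding Xe by (intro eq_matI) auto
              ultimately show ?thesis by simp
            qed
          qed
        qed
      qed
    qed
  qed
  show ?thesis using claim1 claim2 by blast
qed

end
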